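(* Let $m\in\mathbb{Z}_{\ge0}$ and, in $\mathbb{R}^{2m+6}$, let $\rho=\frac12\sum_re_r$, $v_S=\sum_{r\in S}e_r$ ($S\subset\{0,\ldots,2m+5\}$, $|S|=m+1$), $w_{ij}=\rho-e_i-e_j$, $P^{(m)}=\mathrm{conv}\{v_S,w_{ij}\}$, $P_{\rm I}=\mathrm{conv}\{v_S\}$, $P_{\rm II}=\mathrm{conv}(\{v_S:S\subset\{1,\ldots,2m+5\}\}\cup\{w_{0j}:1\le j\le 2m+5\})$, $P_{\rm III}=\mathrm{conv}(\{v_S:S\subset\{3,\ldots,2m+5\}\}\cup\{w_{ij}:0\le i<j\le 2\})$. Then every face of $P^{(m)}$ is a face of $P_{\rm I}$, of $\sigma(P_{\rm II})$ or of $\sigma(P_{\rm III})$ for some coordinate permutation $\sigma\in S_{2m+6}$, except for the interior of $P^{(m)}$ and the images under coordinate permutations of the facet of $P^{(m)}$ given by $\alpha_0+\alpha_1+\alpha_2+\alpha_3=0$. *)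

theory Defs
  imports "HOL-Analysis.Analysis" "HOL-Combinatorics.Permutations"
begin

text \<open>Coordinates of R^(2m+6) are the elements of a finite type 'n with CARD('n) = 2m+6;
  the labelling 0,...,2m+5 of the coordinates is given by a bijection idx from {0..<2m+6} onto 'n.\<close>

definition unitv :: "(nat \<Rightarrow> 'n::finite) \<Rightarrow> nat \<Rightarrow> real ^ 'n" where
  "unitv idx r = axis (idx r) 1"

definition rhov :: "real ^ 'n::finite" where
  "rhov = (\<Sum>k\<in>(UNIV::'n set). axis k 1) /\<^sub>R 2"

definition vS :: "(nat \<Rightarrow> 'n::finite) \<Rightarrow> nat set \<Rightarrow> real ^ 'n" where
  "vS idx S = (\<Sum>r\<in>S. unitv idx r)"

definition wv :: "(nat \<Rightarrow> 'n::finite) \<Rightarrow> nat \<Rightarrow> nat \<Rightarrow> real ^ 'n" where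
  "wv idx i j = rhov - unitv idx i - unitv idx j"

definition Pm :: "nat \<Rightarrow> (nat \<Rightarrow> 'n::finite) \<Rightarrow> (real ^ 'n) set" where
  "Pm m idx = convex hull
     ({vS idx S | S. S \<subseteq> {0..<2*m+6} \<and> card S = m+1}
      \<union> {wv idx i j | i j. i < j \<and> j < 2*m+6})"

definition PI :: "nat \<Rightarrow> (nat \<Rightarrow> 'n::finite) \<Rightarrow> (real ^ 'n) set" where
  "PI m idx = convex hull {vS idx S | S. S \<subseteq> {0..<2*m+6} \<and> card S = m+1}"

definition PII :: "nat \<Rightarrow> (nat \<Rightarrow> 'n::finite) \<Rightarrow> (real ^ 'n) set" where
  "PII m idx = convex hull
     ({vS idx S | S. S \<subseteq> {1..<2*m+6} \<and> card S = m+1}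
      \<union> {wv idx 0 j | j. 1 \<le> j \<and> j < 2*m+6})"

definition PIII :: "nat \<Rightarrow> (nat \<Rightarrow> 'n::finite) \<Rightarrow> (real ^ 'n) set" where
  "PIII m idx = convex hull
     ({vS idx S | S. S \<subseteq> {3..<2*m+6} \<and> card S = m+1}
      \<union> {wv idx i j | i j. i < j \<and> j \<le> 2})"

text \<open>Coordinate permutation: sends the unit vector at k to the unit vector at sigma k.\<close>
definition coordperm :: "('n::finite \<Rightarrow> 'n) \<Rightarrow> real ^ 'n \<Rightarrow> real ^ 'n" where
  "coordperm \<sigma> x = (\<chi> k. x $ inv \<sigma> k)"

definition Facet0 :: "nat \<Rightarrow> (nat \<Rightarrow> 'n::finite) \<Rightarrow> (real ^ 'n) set" where
  "Facet0 m idx = {x \<in> Pm m idx. x $ idx 0 + x $ idx 1 + x $ idx 2 + x $ idx 3 = 0}"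

end

theory Submission
  imports Defs
begin

definition ind :: "'n::finite set \<Rightarrow> real ^ 'n" where
  "ind B = (\<chi> k. if k \<in> B then 1 else 0)"

definition wq :: "'n::finite \<Rightarrow> 'n \<Rightarrow> real ^ 'n" where
  "wq p q = (\<chi> k. 1/2 - (if k = p then 1 else 0) - (if k = q then 1 else 0))"

lemma wq_sym: "wq p q = wq q p"
  by (simp add: wq_def vec_eq_iff)

lemma rhov_nth: "(rhov :: real^'n::finite) $ k = 1/2"
  by (simp add: rhov_def axis_def if_distrib cong: if_cong)

lemma vS_ind: "inj_on idx S \<Longrightarrow> vS idx S = ind (idx ` S)"
proof -
  assume inj: "inj_on idx S"
  show ?thesis
  proof (cases "finite S")
    case True
    have "(vS idx S) $ k = (if k \<in> idx ` S then 1 else 0)" for k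
    proof -
      have "(vS idx S) $ k = (\<Sum>j\<in>idx ` S. axis j (1::real) $ k)"
        unfolding vS_def unitv_def sum_component using sum.reindex[OF inj, of "\<lambda>j. axis j (1::real) $ k"]
        by (simp add: comp_def)
      also have "\<dots> = (\<Sum>j\<in>idx ` S. if k = j then 1 else 0)"
        by (simp add: axis_def eq_commute)
      also have "\<dots> = (if k \<in> idx ` S then 1 else 0)"
        using True by (simp add: sum.delta)
      finally show ?thesis .
    qed
    then show ?thesis by (simp add: ind_def vec_eq_iff)
  next
    case False
    then have "infinite (idx ` S)" using inj finite_imageD by blast
    then show ?thesis using False by simp
  qed
qed

lemma wv_wq: "wv idx i j = wq (idx i) (idx j)"
  by (simp add: wv_def wq_def vec_eq_iff rhov_nth unitv_def axis_def)

lemma inner_ind: "a \<bullet> ind B = (\<Sum>k\<in>B. a $ k)"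
  by (simp add: inner_vec_def ind_def if_distrib sum.If_cases cong: if_cong)

lemma inner_wq: "p \<noteq> q \<Longrightarrow> a \<bullet> wq p q = (\<Sum>k\<in>UNIV. a $ k) / 2 - a $ p - a $ q"
proof -
  have "a \<bullet> wq p q = (\<Sum>k\<in>UNIV. a $ k / 2 - (if k = p then a $ k else 0) - (if k = q then a $ k else 0))"
    unfolding inner_vec_def wq_def by (intro sum.cong) (auto simp: algebra_simps)
  also have "\<dots> = (\<Sum>k\<in>UNIV. a $ k / 2) - (\<Sum>k\<in>UNIV. if k = p then a $ k else 0) - (\<Sum>k\<in>UNIV. if k = q then a $ k else 0)"
    by (simp only: sum_subtractf)
  also have "\<dots> = (\<Sum>k\<in>UNIV. a $ k) / 2 - a $ p - a $ q"
    by (simp only: sum_divide_distrib[symmetric] sum.delta finite UNIV_I if_True)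
  finally show ?thesis .
qed

lemma card_Compl': "card (- (A::'n::finite set)) = CARD('n) - card A"
  by (metis Compl_eq_Diff_UNIV card_Diff_subset finite top_greatest)

lemma sum_split: "sum f (UNIV::'n::finite set) = sum f (-B) + sum f B"
  using sum.subset_diff[of B UNIV f] by (simp add: Compl_eq_Diff_UNIV)

lemma coordperm_linear: "linear (coordperm \<sigma>)"
  by (rule linearI) (simp_all add: coordperm_def vec_eq_iff)

lemma coordperm_ind: "\<sigma> permutes UNIV \<Longrightarrow> coordperm \<sigma> (ind B) = ind (\<sigma> ` B)"
proof -
  assume p: "\<sigma> permutes UNIV"
  have "k \<in> \<sigma> ` B \<longleftrightarrow> inv \<sigma> k \<in> B" for k
  proof
    assume "k \<in> \<sigma> ` B" then obtain x where "x \<in> B" "k = \<sigma> x" by blast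
    then show "inv \<sigma> k \<in> B" using permutes_inverses(2)[OF p] by simp
  next
    assume "inv \<sigma> k \<in> B" then have "\<sigma> (inv \<sigma> k) \<in> \<sigma> ` B" by blast
    then show "k \<in> \<sigma> ` B" using permutes_inverses(1)[OF p] by simp
  qed
  then show ?thesis by (simp add: coordperm_def ind_def vec_eq_iff)
qed

lemma coordperm_wq: "\<sigma> permutes UNIV \<Longrightarrow> coordperm \<sigma> (wq p q) = wq (\<sigma> p) (\<sigma> q)"
proof -
  assume p: "\<sigma> permutes UNIV"
  have "inv \<sigma> k = x \<longleftrightarrow> k = \<sigma> x" for k x
    using permutes_inverses[OF p] by metis
  then show ?thesis by (simp add: coordperm_def wq_def vec_eq_iff)
qed

lemma coordperm_inv: "\<sigma> permutes UNIV \<Longrightarrow> coordperm \<sigma> (coordperm (inv \<sigma>) x) = x"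
  by (simp add: coordperm_def vec_eq_iff permutes_inv_inv permutes_inverses)

lemma coordperm_nth: "coordperm \<sigma> x $ k = x $ inv \<sigma> k"
  by (simp add: coordperm_def)

lemma perm_exists:
  fixes A B :: "'n::finite set"
  assumes "card A = card B"
  shows "\<exists>\<sigma>. \<sigma> permutes UNIV \<and> \<sigma> ` A = B"
proof -
  obtain f where f: "bij_betw f A B" using finite_same_card_bij[OF _ _ assms] by auto
  have "card (-A) = card (-B)" using assms by (simp add: card_Compl')
  then obtain g where g: "bij_betw g (-A) (-B)" using finite_same_card_bij[OF finite finite] by blast
  define \<sigma> where "\<sigma> x = (if x \<in> A then f x else g x)" for x
  have 1: "bij_betw \<sigma> A B" using f by (rule bij_betw_cong[THEN iffD1, rotated]) (simp add: \<sigma>_def)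
  have 2: "bij_betw \<sigma> (-A) (-B)" using g by (rule bij_betw_cong[THEN iffD1, rotated]) (simp add: \<sigma>_def)
  have "bij_betw \<sigma> (A \<union> -A) (B \<union> -B)" by (rule bij_betw_combine[OF 1 2]) auto
  then have "bij_betw \<sigma> UNIV UNIV" by simp
  then have "\<sigma> permutes UNIV" by (rule bij_imp_permutes) auto
  moreover have "\<sigma> ` A = B" using 1 by (simp add: bij_betw_def)
  ultimately show ?thesis by blast
qed

context
  fixes \<alpha> :: "'n::finite \<Rightarrow> real" and b :: real and m :: nat
  assumes cardn: "CARD('n) = 2*m+6"
  and hv: "\<And>B. card B = m+1 \<Longrightarrow> sum \<alpha> B \<le> b"
  and hw: "\<And>p q. p \<noteq> q \<Longrightarrow> sum \<alpha> UNIV / 2 - \<alpha> p - \<alpha> q \<le> b"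
  and proper: "(\<exists>B. card B = m+1 \<and> sum \<alpha> B < b) \<or> (\<exists>p q. p \<noteq> q \<and> sum \<alpha> UNIV / 2 - \<alpha> p - \<alpha> q < b)"
begin

lemma exch:
  assumes B: "card B = m+1" "sum \<alpha> B = b" and k: "k \<in> B" and l: "l \<notin> B"
  shows "\<alpha> l \<le> \<alpha> k"
proof -
  let ?B' = "insert l (B - {k})"
  have fin: "finite B" by simp
  have "card (B - {k}) = m" using B k by simp
  then have "card ?B' = m+1" using l by simp
  then have "sum \<alpha> ?B' \<le> b" by (rule hv)
  moreover have "sum \<alpha> ?B' = \<alpha> l + (sum \<alpha> B - \<alpha> k)"
    using l k by (simp add: sum_diff1)
  ultimately show ?thesis using B by simp
qed

definition "mu = Min (range \<alpha>)"

lemma mu_le: "mu \<le> \<alpha> k"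
  unfolding mu_def by (rule Min_le) auto

lemma mu_ex: "\<exists>z. \<alpha> z = mu"
proof -
  have "mu \<in> range \<alpha>" unfolding mu_def by (rule Min_in) auto
  then show ?thesis by auto
qed

lemma sumUNIV_const: "(\<forall>k. \<alpha> k = (c::real)) \<Longrightarrow> sum \<alpha> UNIV = (2*real m+6) * c"
  using cardn by simp

lemma const_contra:
  assumes c: "\<forall>k. \<alpha> k = c" and wf: "p0 \<noteq> q0" "sum \<alpha> UNIV / 2 - \<alpha> p0 - \<alpha> q0 = b"
  shows False
proof -
  have s: "sum \<alpha> UNIV = (2*real m+6) * c" using sumUNIV_const[OF c] .
  have bb: "b = (m+1)*c" using wf(2) s c by (simp add: field_simps)
  have "\<And>B. card B = m+1 \<Longrightarrow> sum \<alpha> B = b" using c bb by simp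
  moreover have "\<And>p q. sum \<alpha> UNIV / 2 - \<alpha> p - \<alpha> q = b" using c bb s by (simp add: field_simps)
  ultimately show False using proper by auto
qed

context
  fixes p0 q0 assumes wf: "p0 \<noteq> q0" "sum \<alpha> UNIV / 2 - \<alpha> p0 - \<alpha> q0 = b"
begin

lemma minpair: "r \<noteq> t \<Longrightarrow> \<alpha> p0 + \<alpha> q0 \<le> \<alpha> r + \<alpha> t"
  using hw[of r t] wf by simp

lemma avoidZ:
  assumes B: "card B = m+1" "sum \<alpha> B = b" and k: "k \<in> B" "\<alpha> k = mu"
  shows False
proof -
  have out: "\<alpha> l = mu" if "l \<notin> B" for l
    using exch[OF B k(1) that] k(2) mu_le[of l] by simp
  have cB: "card (-B) = m+5" using B cardn by (simp add: card_Compl')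
  have "sum \<alpha> (-B) = sum (\<lambda>_. mu) (-B)" using out by (intro sum.cong) auto
  then have sB: "sum \<alpha> (-B) = (m+5) * mu" using cB by simp
  have "sum \<alpha> UNIV = sum \<alpha> B + sum \<alpha> (-B)"
    using sum_split[of \<alpha> B] by simp
  then have s: "sum \<alpha> UNIV = b + (m+5)*mu" using B sB by simp
  have "b \<le> sum \<alpha> UNIV / 2 - 2*mu" using wf(2) mu_le[of p0] mu_le[of q0] by simp
  with s have le: "sum \<alpha> UNIV \<le> (2*m+6) * mu" by (simp add: field_simps)
  have "sum (\<lambda>k. \<alpha> k - mu) UNIV = sum \<alpha> UNIV - (2*m+6)*mu"
    using cardn by (simp add: sum_subtractf)
  then have "sum (\<lambda>k. \<alpha> k - mu) UNIV \<le> 0" using le by simp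
  moreover have "\<forall>k\<in>UNIV. 0 \<le> \<alpha> k - mu" using mu_le by simp
  ultimately have "\<forall>k\<in>UNIV. \<alpha> k - mu = 0"
    using sum_nonneg_eq_0_iff[of UNIV "\<lambda>k. \<alpha> k - mu"] sum_nonneg[of UNIV "\<lambda>k. \<alpha> k - mu"] by auto
  then have "\<forall>k. \<alpha> k = mu" by simp
  then show False using const_contra wf by blast
qed

lemma pair_meets:
  assumes "p \<noteq> q" "sum \<alpha> UNIV / 2 - \<alpha> p - \<alpha> q = b"
  shows "\<alpha> p = mu \<or> \<alpha> q = mu"
proof -
  obtain z where z: "\<alpha> z = mu" using mu_ex by blast
  have eq: "\<alpha> p + \<alpha> q = \<alpha> p0 + \<alpha> q0" using assms wf by simp
  show ?thesis
  proof (cases "z = p \<or> z = q")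
    case True then show ?thesis using z by auto
  next
    case False
    then have "\<alpha> p0 + \<alpha> q0 \<le> \<alpha> z + \<alpha> q" using minpair[of z q] by auto
    then show ?thesis using eq z mu_le[of p] by simp
  qed
qed

lemma pair_both:
  assumes "z1 \<noteq> z2" "\<alpha> z1 = mu" "\<alpha> z2 = mu" "p \<noteq> q" "sum \<alpha> UNIV / 2 - \<alpha> p - \<alpha> q = b"
  shows "\<alpha> p = mu \<and> \<alpha> q = mu"
proof -
  have eq: "\<alpha> p + \<alpha> q = \<alpha> p0 + \<alpha> q0" using assms wf by simp
  have "\<alpha> p0 + \<alpha> q0 \<le> \<alpha> z1 + \<alpha> z2" using minpair assms by blast
  then show ?thesis using eq assms mu_le[of p] mu_le[of q] by simp
qed

lemma bigZ:
  assumes "4 \<le> card {k. \<alpha> k = mu}"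
  shows "\<exists>R (t::real). card R = 4 \<and> (\<forall>k\<in>R. \<alpha> k = mu) \<and> (\<forall>k. k \<notin> R \<longrightarrow> \<alpha> k = t) \<and> mu < t \<and> b = (m+1)*t"
proof -
  obtain R where R: "R \<subseteq> {k. \<alpha> k = mu}" "card R = 4"
    using obtain_subset_with_card_n[OF assms] by blast
  have cC: "card (-R) = 2*m+2" using R cardn by (simp add: card_Compl')
  obtain B1 where B1: "B1 \<subseteq> -R" "card B1 = m+1"
    using obtain_subset_with_card_n[of "m+1" "-R"] cC by auto
  define B2 where "B2 = -R - B1"
  have cB2: "card B2 = m+1" unfolding B2_def using B1 cC by (simp add: card_Diff_subset)
  obtain z1 where z1: "z1 \<in> R" using R by fastforce
  have "card (R - {z1}) = 3" using R z1 by simp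
  then have "R - {z1} \<noteq> {}" by (metis card.empty zero_neq_numeral)
  then obtain z2 where z2: "z2 \<in> R - {z1}" by blast
  have "z2 \<in> R" "z1 \<noteq> z2" using z2 by auto
  have az: "\<alpha> z1 = mu" "\<alpha> z2 = mu" using z1 \<open>z2 \<in> R\<close> R(1) by blast+
  have "\<alpha> p0 + \<alpha> q0 \<le> \<alpha> z1 + \<alpha> z2" by (rule minpair) fact
  then have bb: "b = sum \<alpha> UNIV / 2 - 2*mu" using wf az mu_le[of p0] mu_le[of q0] by simp
  have sR: "sum \<alpha> R = 4*mu"
  proof -
    have "sum \<alpha> R = sum (\<lambda>_. mu) R" using R by (intro sum.cong) auto
    then show ?thesis using R by simp
  qed
  have s1: "sum \<alpha> UNIV = sum \<alpha> (-R) + sum \<alpha> R"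
    by (rule sum_split)
  have s2: "sum \<alpha> (-R) = sum \<alpha> B1 + sum \<alpha> B2"
    unfolding B2_def using sum.subset_diff[of B1 "-R" \<alpha>] B1 by simp
  have h1: "sum \<alpha> B1 \<le> b" using hv B1 by blast
  have h2: "sum \<alpha> B2 \<le> b" using hv cB2 by blast
  have e1: "sum \<alpha> B1 = b" and e2: "sum \<alpha> B2 = b"
    using h1 h2 s1 s2 sR bb by linarith+
  have eqk: "\<alpha> k = \<alpha> l" if "k \<in> B1" "l \<in> B2" for k l
  proof -
    have "l \<notin> B1" "k \<notin> B2" using that unfolding B2_def by auto
    then show ?thesis using exch[OF B1(2) e1 \<open>k\<in>B1\<close>] exch[OF cB2 e2 \<open>l\<in>B2\<close>] by force
  qed
  have "B1 \<noteq> {}" "B2 \<noteq> {}" using B1 cB2 by auto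
  then obtain c1 c2 where c1: "c1 \<in> B1" and c2: "c2 \<in> B2" by blast
  define t where "t = \<alpha> c1"
  have allt: "\<forall>k. k \<notin> R \<longrightarrow> \<alpha> k = t"
  proof (intro allI impI)
    fix k assume "k \<notin> R"
    then have "k \<in> B1 \<or> k \<in> B2" unfolding B2_def by auto
    then show "\<alpha> k = t" unfolding t_def using eqk c1 c2 by metis
  qed
  have sC: "sum \<alpha> (-R) = (2*m+2) * t"
  proof -
    have "sum \<alpha> (-R) = sum (\<lambda>_. t) (-R)" using allt by (intro sum.cong) auto
    then show ?thesis using cC by simp
  qed
  have "mu \<le> t" using mu_le unfolding t_def by simp
  moreover have "t \<noteq> mu"
  proof
    assume "t = mu"
    then have "\<forall>k. \<alpha> k = mu" using allt R by auto
    then show False using const_contra wf by blast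
  qed
  ultimately have "mu < t" by simp
  moreover have "b = (m+1)*t"
  proof -
    have "sum \<alpha> UNIV = 2*(real m*t) + 2*t + 4*mu" using s1 sC sR by (simp add: algebra_simps)
    then have "b = real m * t + t" using bb by linarith
    then show ?thesis by (simp add: algebra_simps)
  qed
  moreover have "\<forall>k\<in>R. \<alpha> k = mu" using R(1) by blast
  ultimately show ?thesis using R(2) allt by (intro exI[of _ R] exI[of _ t]) simp
qed

lemma core:
  "(\<exists>R (t::real) \<mu>. card R = 4 \<and> (\<forall>k\<in>R. \<alpha> k = \<mu>) \<and> (\<forall>k. k \<notin> R \<longrightarrow> \<alpha> k = t) \<and> \<mu> < t \<and> b = (m+1)*t)
   \<or> (\<exists>Z. card Z = 3 \<and> (\<forall>B. card B = m+1 \<and> sum \<alpha> B = b \<longrightarrow> B \<inter> Z = {})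
        \<and> (\<forall>p q. p \<noteq> q \<and> sum \<alpha> UNIV / 2 - \<alpha> p - \<alpha> q = b \<longrightarrow> p \<in> Z \<and> q \<in> Z))
   \<or> (\<exists>z. (\<forall>B. card B = m+1 \<and> sum \<alpha> B = b \<longrightarrow> z \<notin> B)
        \<and> (\<forall>p q. p \<noteq> q \<and> sum \<alpha> UNIV / 2 - \<alpha> p - \<alpha> q = b \<longrightarrow> p = z \<or> q = z))"
proof -
  define Z where "Z = {k. \<alpha> k = mu}"
  have avoid: "\<forall>B. card B = m+1 \<and> sum \<alpha> B = b \<longrightarrow> B \<inter> Z = {}"
    using avoidZ unfolding Z_def by blast
  have Zne: "Z \<noteq> {}" using mu_ex unfolding Z_def by blast
  then have c1: "1 \<le> card Z" by (simp add: Suc_le_eq card_gt_0_iff)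
  consider "4 \<le> card Z" | "card Z = 3" | "card Z = 2" | "card Z = 1" using c1 by linarith
  then show ?thesis
  proof cases
    case 1 then show ?thesis using bigZ unfolding Z_def by blast
  next
    case 2
    obtain z1 where z1: "z1 \<in> Z" using Zne by blast
    have "card (Z - {z1}) = 2" using 2 z1 by simp
    then have "Z - {z1} \<noteq> {}" by (metis card.empty zero_neq_numeral)
    then obtain z2 where "z2 \<in> Z - {z1}" by blast
    then have z: "z1 \<in> Z" "z2 \<in> Z" "z1 \<noteq> z2" using z1 by auto
    have "\<forall>p q. p \<noteq> q \<and> sum \<alpha> UNIV / 2 - \<alpha> p - \<alpha> q = b \<longrightarrow> p \<in> Z \<and> q \<in> Z"
      using pair_both[of z1 z2] z unfolding Z_def by blast
    then show ?thesis using 2 avoid by blast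
  next
    case 3
    then obtain z1 z2 where z: "Z = {z1, z2}" "z1 \<noteq> z2" by (meson card_2_iff)
    have "\<forall>p q. p \<noteq> q \<and> sum \<alpha> UNIV / 2 - \<alpha> p - \<alpha> q = b \<longrightarrow> p = z1 \<or> q = z1"
    proof (intro allI impI)
      fix p q assume h: "p \<noteq> q \<and> sum \<alpha> UNIV / 2 - \<alpha> p - \<alpha> q = b"
      have "\<alpha> z1 = mu" "\<alpha> z2 = mu" using z unfolding Z_def by auto
      then have "\<alpha> p = mu \<and> \<alpha> q = mu" using pair_both[of z1 z2 p q] z h by blast
      then have "p \<in> Z" "q \<in> Z" unfolding Z_def by auto
      then show "p = z1 \<or> q = z1" using z h by auto
    qed
    moreover have "z1 \<in> Z" using z by auto
    ultimately show ?thesis using avoid by blast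
  next
    case 4
    then obtain z where z: "Z = {z}" by (meson card_1_singletonE)
    have "\<forall>p q. p \<noteq> q \<and> sum \<alpha> UNIV / 2 - \<alpha> p - \<alpha> q = b \<longrightarrow> p = z \<or> q = z"
    proof (intro allI impI)
      fix p q assume h: "p \<noteq> q \<and> sum \<alpha> UNIV / 2 - \<alpha> p - \<alpha> q = b"
      then have "\<alpha> p = mu \<or> \<alpha> q = mu" using pair_meets by blast
      then show "p = z \<or> q = z" using z unfolding Z_def by auto
    qed
    moreover have "z \<in> Z" using z by auto
    ultimately show ?thesis using avoid by blast
  qed
qed

end
end

lemma idx_pre:
  assumes bij: "bij_betw idx {0..<2*(m::nat)+6} (UNIV::'n::finite set)"
  shows "\<exists>S. S \<subseteq> {0..<2*m+6} \<and> B = idx ` S \<and> card S = card B \<and> inj_on idx S"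
proof -
  have "B \<subseteq> idx ` {0..<2*m+6}" using bij by (simp add: bij_betw_def)
  then obtain S where S: "S \<subseteq> {0..<2*m+6}" "B = idx ` S" by (auto simp: subset_image_iff)
  have inj: "inj_on idx S" using bij S(1) by (meson bij_betw_def inj_on_subset)
  then show ?thesis using S by (auto simp: card_image)
qed

lemma idx_ex:
  assumes bij: "bij_betw idx {0..<2*(m::nat)+6} (UNIV::'n::finite set)"
  shows "\<exists>i<2*m+6. p = idx i"
proof -
  have "p \<in> idx ` {0..<2*m+6}" using bij by (simp add: bij_betw_def)
  then show ?thesis by auto
qed

lemma idx_inj:
  assumes bij: "bij_betw idx {0..<2*(m::nat)+6} (UNIV::'n::finite set)"
  and "i < 2*m+6" "j < 2*m+6" "idx i = idx j"
  shows "i = j"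
  using assms by (metis atLeastLessThan_iff bij_betw_def inj_onD zero_le)

lemma gens_V:
  assumes bij: "bij_betw idx {0..<2*(m::nat)+6} (UNIV::'n::finite set)"
  shows "{vS idx S | S. S \<subseteq> {0..<2*m+6} \<and> card S = m+1} = {ind B | B. card (B::'n set) = m+1}"
proof (intro set_eqI iffI)
  fix x assume "x \<in> {vS idx S | S. S \<subseteq> {0..<2*m+6} \<and> card S = m+1}"
  then obtain S where S: "S \<subseteq> {0..<2*m+6}" "card S = m+1" "x = vS idx S" by blast
  have inj: "inj_on idx S" using bij S(1) by (meson bij_betw_def inj_on_subset)
  then have "x = ind (idx ` S)" "card (idx ` S) = m+1" using S by (auto simp: vS_ind card_image)
  then show "x \<in> {ind B | B. card (B::'n set) = m+1}" by blast
next
  fix x assume "x \<in> {ind B | B. card (B::'n set) = m+1}"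
  then obtain B where B: "card B = m+1" "x = ind B" by blast
  obtain S where S: "S \<subseteq> {0..<2*m+6}" "B = idx ` S" "card S = card B" "inj_on idx S"
    using idx_pre[OF bij] by blast
  then have "x = vS idx S" using B by (simp add: vS_ind)
  then show "x \<in> {vS idx S | S. S \<subseteq> {0..<2*m+6} \<and> card S = m+1}"
    using B S by auto
qed

lemma gens_W:
  assumes bij: "bij_betw idx {0..<2*(m::nat)+6} (UNIV::'n::finite set)"
  shows "{wv idx i j | i j. i < j \<and> j < 2*m+6} = {wq p q | p q. p \<noteq> (q::'n)}"
proof (intro set_eqI iffI)
  fix x assume "x \<in> {wv idx i j | i j. i < j \<and> j < 2*m+6}"
  then obtain i j where ij: "i < j" "j < 2*m+6" "x = wv idx i j" by blast
  have "idx i \<noteq> idx j" using idx_inj[OF bij, of i j] ij by auto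
  then show "x \<in> {wq p q | p q. p \<noteq> (q::'n)}" using ij by (auto simp: wv_wq)
next
  fix x assume "x \<in> {wq p q | p q. p \<noteq> (q::'n)}"
  then obtain p q where pq: "p \<noteq> q" "x = wq p q" by blast
  obtain i j where ij: "i < 2*m+6" "j < 2*m+6" "p = idx i" "q = idx j" using idx_ex[OF bij] by metis
  have "i \<noteq> j" using pq ij by auto
  then consider "i < j" | "j < i" by linarith
  then show "x \<in> {wv idx i j | i j. i < j \<and> j < 2*m+6}"
  proof cases
    case 1 then show ?thesis using ij pq by (auto simp: wv_wq)
  next
    case 2 then have "x = wv idx j i" using ij pq by (simp add: wv_wq wq_sym)
    then show ?thesis using 2 ij by blast
  qed
qed

definition GV :: "nat \<Rightarrow> (real^'n::finite) set" where "GV m = {ind B | B. card (B::'n set) = m+1}"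
definition GW :: "(real^'n::finite) set" where "GW = {wq p q | p q. p \<noteq> (q::'n)}"

lemma Pm_eq:
  assumes bij: "bij_betw idx {0..<2*(m::nat)+6} (UNIV::'n::finite set)"
  shows "Pm m idx = convex hull (GV m \<union> (GW :: (real^'n) set))"
  unfolding Pm_def GV_def GW_def gens_V[OF bij] gens_W[OF bij] ..

lemma PI_eq:
  assumes bij: "bij_betw idx {0..<2*(m::nat)+6} (UNIV::'n::finite set)"
  shows "PI m idx = convex hull (GV m :: (real^'n) set)"
  unfolding PI_def GV_def gens_V[OF bij] ..

lemma finite_G: "finite (GV m \<union> (GW :: (real^'n::finite) set))"
proof -
  have "GV m \<subseteq> range (ind :: 'n set \<Rightarrow> _)" unfolding GV_def by blast
  moreover have "(GW :: (real^'n::finite) set) \<subseteq> range (case_prod wq)"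
  proof
    fix x :: "real^'n" assume "x \<in> GW"
    then obtain p q where "x = wq p q" unfolding GW_def by blast
    then have "x = case_prod wq (p, q)" by simp
    then show "x \<in> range (case_prod wq)" by (rule range_eqI)
  qed
  moreover have "finite (range (ind :: 'n set \<Rightarrow> real^'n))" by simp
  moreover have "finite (range (case_prod (wq :: 'n \<Rightarrow> 'n \<Rightarrow> real^'n)))" by simp
  ultimately show ?thesis using finite_subset by (metis finite_Un)
qed

lemma PII_gen:
  assumes bij: "bij_betw idx {0..<2*(m::nat)+6} (UNIV::'n::finite set)"
  and "card (B::'n set) = m+1" "idx 0 \<notin> B"
  shows "ind B \<in> PII m idx"
proof -
  obtain S where S: "S \<subseteq> {0..<2*m+6}" "B = idx ` S" "card S = card B" "inj_on idx S"
    using idx_pre[OF bij] by blast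
  have "0 \<notin> S" using S assms by auto
  have "x \<in> {1..<2*m+6}" if "x \<in> S" for x
  proof -
    have "x < 2*m+6" using that S(1) by auto
    moreover have "x \<noteq> 0" using that \<open>0 \<notin> S\<close> by metis
    ultimately show ?thesis by simp
  qed
  then have "S \<subseteq> {1..<2*m+6}" by blast
  then have "vS idx S \<in> {vS idx S | S. S \<subseteq> {1..<2*m+6} \<and> card S = m+1}" using S assms by auto
  then show ?thesis unfolding PII_def using S by (auto simp: vS_ind intro: hull_inc)
qed

lemma PII_genw:
  assumes bij: "bij_betw idx {0..<2*(m::nat)+6} (UNIV::'n::finite set)"
  and "q \<noteq> idx 0"
  shows "wq (idx 0) q \<in> PII m idx"
proof -
  obtain j where j: "j < 2*m+6" "q = idx j" using idx_ex[OF bij] by blast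
  then have "j \<noteq> 0" using assms by metis
  then have "wv idx 0 j \<in> {wv idx 0 j | j. 1 \<le> j \<and> j < 2*m+6}" using j by auto
  then show ?thesis unfolding PII_def using j by (auto simp: wv_wq intro: hull_inc)
qed

lemma PIII_gen:
  assumes bij: "bij_betw idx {0..<2*(m::nat)+6} (UNIV::'n::finite set)"
  and "card (B::'n set) = m+1" "B \<inter> idx ` {0,1,2} = {}"
  shows "ind B \<in> PIII m idx"
proof -
  obtain S where S: "S \<subseteq> {0..<2*m+6}" "B = idx ` S" "card S = card B" "inj_on idx S"
    using idx_pre[OF bij] by blast
  have "0 \<notin> S" "1 \<notin> S" "2 \<notin> S" using S assms by auto
  have "x \<in> {3..<2*m+6}" if "x \<in> S" for x
  proof -
    have "x < 2*m+6" using that S(1) by auto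
    moreover have "x \<noteq> 0" "x \<noteq> 1" "x \<noteq> 2" using that \<open>0 \<notin> S\<close> \<open>1 \<notin> S\<close> \<open>2 \<notin> S\<close> by metis+
    ultimately show ?thesis by simp
  qed
  then have "S \<subseteq> {3..<2*m+6}" by blast
  then have "vS idx S \<in> {vS idx S | S. S \<subseteq> {3..<2*m+6} \<and> card S = m+1}" using S assms by auto
  then show ?thesis unfolding PIII_def using S by (auto simp: vS_ind intro: hull_inc)
qed

lemma PIII_genw:
  assumes "p \<noteq> q" "p \<in> idx ` {0,1,2}" "q \<in> idx ` {0,1,2}"
  shows "wq p q \<in> PIII m idx"
proof -
  obtain i where i: "i \<in> {0,1,2::nat}" "p = idx i" using assms(2) by blast
  obtain j where j: "j \<in> {0,1,2::nat}" "q = idx j" using assms(3) by blast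
  have ij: "i \<le> 2" "j \<le> 2" "p = idx i" "q = idx j" using i j by auto
  have "i \<noteq> j" using ij assms by auto
  then consider "i < j" | "j < i" by linarith
  then have "wq p q \<in> {wv idx i j | i j. i < j \<and> j \<le> 2}"
  proof cases
    case 1 then show ?thesis using ij by (auto simp: wv_wq)
  next
    case 2 then have "wq p q = wv idx j i" using ij by (simp add: wv_wq wq_sym)
    then show ?thesis using 2 ij by blast
  qed
  then show ?thesis unfolding PIII_def by (auto intro: hull_inc)
qed

lemma PII_sub: "PII m idx \<subseteq> Pm m idx"
proof -
  have s: "{1..<2*m+6} \<subseteq> {0..<2*m+6}" by auto
  have w: "{wv idx 0 j | j. 1 \<le> j \<and> j < 2*m+6} \<subseteq> {wv idx i j | i j. i < j \<and> j < 2*m+6}"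
  proof
    fix x assume "x \<in> {wv idx 0 j | j. 1 \<le> j \<and> j < 2*m+6}"
    then obtain j where "x = wv idx 0 j" "1 \<le> j" "j < 2*m+6" by blast
    then show "x \<in> {wv idx i j | i j. i < j \<and> j < 2*m+6}" by force
  qed
  show ?thesis unfolding PII_def Pm_def
    by (intro hull_mono Un_mono w) (use s in blast)
qed

lemma PIII_sub: "PIII m idx \<subseteq> Pm m idx"
proof -
  have s: "{3..<2*m+6} \<subseteq> {0..<2*m+6}" by auto
  have w: "{wv idx i j | i j. i < j \<and> j \<le> 2} \<subseteq> {wv idx i j | i j. i < j \<and> j < 2*m+6}"
  proof
    fix x assume "x \<in> {wv idx i j | i j. i < j \<and> j \<le> 2}"
    then obtain i j where "x = wv idx i j" "i < j" "j \<le> 2" by blast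
    then show "x \<in> {wv idx i j | i j. i < j \<and> j < 2*m+6}" by force
  qed
  show ?thesis unfolding PIII_def Pm_def
    by (intro hull_mono Un_mono w) (use s in blast)
qed

lemma Pm_perm:
  assumes bij: "bij_betw idx {0..<2*(m::nat)+6} (UNIV::'n::finite set)"
  and p: "\<sigma> permutes (UNIV::'n set)"
  shows "coordperm \<sigma> ` Pm m idx \<subseteq> Pm m idx"
proof -
  have "coordperm \<sigma> ` (GV m \<union> GW) \<subseteq> GV m \<union> (GW :: (real^'n) set)"
  proof
    fix y assume "y \<in> coordperm \<sigma> ` (GV m \<union> (GW :: (real^'n) set))"
    then obtain x where x: "x \<in> GV m \<union> GW" "y = coordperm \<sigma> x" by blast
    show "y \<in> GV m \<union> GW"
    proof (cases "x \<in> GV m")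
      case True
      then obtain B where B: "card (B::'n set) = m+1" "x = ind B" unfolding GV_def by blast
      have "card (\<sigma> ` B) = m+1" using B permutes_inj[OF p] by (simp add: card_image inj_on_subset)
      then show ?thesis using x B coordperm_ind[OF p] unfolding GV_def by auto
    next
      case False
      then obtain p q where pq: "p \<noteq> (q::'n)" "x = wq p q" using x unfolding GW_def by blast
      have "\<sigma> p \<noteq> \<sigma> q" using pq permutes_inj[OF p] by (meson injD)
      then show ?thesis using x pq coordperm_wq[OF p] unfolding GW_def by auto
    qed
  qed
  then show ?thesis unfolding Pm_eq[OF bij] convex_hull_linear_image[OF coordperm_linear]
    by (rule hull_mono)
qed

lemma Pm_sum:
  assumes bij: "bij_betw idx {0..<2*(m::nat)+6} (UNIV::'n::finite set)"
  and card: "CARD('n) = 2*m+6"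
  and x: "x \<in> Pm m idx"
  shows "(\<Sum>k\<in>UNIV. x $ k) = real m + 1"
proof -
  define one :: "real^'n" where "one = (\<chi> k. 1)"
  have io: "one \<bullet> y = (\<Sum>k\<in>UNIV. y $ k)" for y unfolding one_def inner_vec_def by simp
  have "GV m \<union> GW \<subseteq> {y. one \<bullet> y = real m + 1}"
  proof
    fix y assume "y \<in> GV m \<union> (GW :: (real^'n) set)"
    then show "y \<in> {y. one \<bullet> y = real m + 1}"
    proof
      assume "y \<in> GV m"
      then obtain B where "card (B::'n set) = m+1" "y = ind B" unfolding GV_def by blast
      then show ?thesis by (simp add: inner_ind one_def)
    next
      assume "y \<in> GW"
      then obtain p q where "p \<noteq> (q::'n)" "y = wq p q" unfolding GW_def by blast
      then show ?thesis using card by (simp add: inner_wq one_def)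
    qed
  qed
  then have "Pm m idx \<subseteq> {y. one \<bullet> y = real m + 1}"
    unfolding Pm_eq[OF bij] by (rule hull_minimal) (rule convex_hyperplane)
  then show ?thesis using x io by auto
qed

lemma face_sub:
  assumes "F face_of P" "F = convex hull S'" "S' \<subseteq> Q" "convex Q" "Q \<subseteq> P"
  shows "F face_of Q"
proof -
  have "F \<subseteq> Q" using assms(2-4) by (simp add: hull_minimal)
  then show ?thesis using assms face_of_subset by blast
qed

lemma img_ind:
  assumes p: "\<sigma> permutes UNIV" and "ind (inv \<sigma> ` B) \<in> P"
  shows "ind B \<in> coordperm \<sigma> ` P"
proof -
  have "ind B = coordperm \<sigma> (ind (inv \<sigma> ` B))"
    using coordperm_inv[OF p, of "ind B"] coordperm_ind[OF permutes_inv[OF p]] by simp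
  then show ?thesis using assms(2) by blast
qed

lemma img_wq:
  assumes p: "\<sigma> permutes UNIV" and "wq (inv \<sigma> p) (inv \<sigma> q) \<in> P"
  shows "wq p q \<in> coordperm \<sigma> ` P"
proof -
  have "wq p q = coordperm \<sigma> (wq (inv \<sigma> p) (inv \<sigma> q))"
    using coordperm_wq[OF p] permutes_inverses(1)[OF p] by simp
  then show ?thesis using assms(2) by blast
qed

lemma perm_sum:
  assumes p: "\<sigma> permutes UNIV"
  shows "(\<Sum>k\<in>\<sigma> ` A. coordperm \<sigma> x $ k) = (\<Sum>j\<in>A. x $ j)"
proof -
  have "inj_on \<sigma> A" using permutes_inj[OF p] inj_on_subset by blast
  then have "(\<Sum>k\<in>\<sigma> ` A. coordperm \<sigma> x $ k) = (\<Sum>j\<in>A. coordperm \<sigma> x $ \<sigma> j)"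
    by (simp add: sum.reindex)
  then show ?thesis by (simp add: coordperm_nth permutes_inverses(2)[OF p])
qed

lemma facet_sum:
  assumes bij: "bij_betw idx {0..<2*(m::nat)+6} (UNIV::'n::finite set)"
  shows "x $ idx 0 + x $ idx 1 + x $ idx 2 + x $ idx 3 = (\<Sum>j\<in>idx ` {0,1,2,3}. (x::real^'n) $ j)"
proof -
  have "inj_on idx {0..<2*m+6}" using bij by (simp add: bij_betw_def)
  then have "inj_on idx {0,1,2,3}" by (rule inj_on_subset) auto
  then have "(\<Sum>j\<in>idx ` {0,1,2,3}. x $ j) = (\<Sum>i\<in>{0,1,2,3::nat}. x $ idx i)" by (simp add: sum.reindex)
  then show ?thesis by simp
qed

theorem lemma5p12:
  fixes m :: nat and idx :: "nat \<Rightarrow> 'n::finite"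
  assumes "CARD('n) = 2*m+6"
    and "bij_betw idx {0..<2*m+6} (UNIV::'n set)"
    and "F face_of Pm m idx"
    and "F \<noteq> Pm m idx"
    and "\<And>\<sigma>. \<sigma> permutes (UNIV::'n set) \<Longrightarrow> F \<noteq> coordperm \<sigma> ` Facet0 m idx"
  shows "F face_of PI m idx
     \<or> (\<exists>\<sigma>. \<sigma> permutes (UNIV::'n set) \<and> F face_of (coordperm \<sigma> ` PII m idx))
     \<or> (\<exists>\<sigma>. \<sigma> permutes (UNIV::'n set) \<and> F face_of (coordperm \<sigma> ` PIII m idx))"
proof -
  note cardn = assms(1) and bij = assms(2) and face = assms(3) and ne = assms(4) and nf = assms(5)
  let ?G = "GV m \<union> (GW :: (real^'n) set)"
  have PmG: "Pm m idx = convex hull ?G" by (rule Pm_eq[OF bij])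
  show ?thesis
  proof (cases "F = {}")
    case True then show ?thesis by simp
  next
    case False
    have "polytope (Pm m idx)" unfolding PmG polytope_def using finite_G by blast
    then have "polyhedron (Pm m idx)" by (rule polytope_imp_polyhedron)
    then have "F exposed_face_of Pm m idx" using face exposed_face_of_polyhedron by blast
    then have "\<exists>a b. Pm m idx \<subseteq> {x. a \<bullet> x \<le> b} \<and> F = Pm m idx \<inter> {x. a \<bullet> x = b}"
      unfolding exposed_face_of_def by (rule conjunct2)
    then obtain a b0 where ab: "Pm m idx \<subseteq> {x. a \<bullet> x \<le> b0}" "F = Pm m idx \<inter> {x. a \<bullet> x = b0}"
      by blast
    have face': "F face_of convex hull ?G" using face PmG by simp
    obtain S' where S': "S' \<subseteq> ?G" "F = convex hull S'"
      by (rule face_of_convex_hull_subset[OF finite_imp_compact[OF finite_G] face'])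
    have S'F: "S' \<subseteq> F" unfolding S'(2) by (rule hull_subset)
    have Gsub: "?G \<subseteq> Pm m idx" unfolding PmG by (rule hull_subset)
    have onS: "g \<in> ?G \<and> a \<bullet> g = b0" if "g \<in> S'" for g
    proof -
      have "g \<in> ?G" using S'(1) that by (rule subsetD)
      moreover have "g \<in> F" using S'F that by (rule subsetD)
      then have "a \<bullet> g = b0" using ab(2) by simp
      ultimately show ?thesis by simp
    qed
    define \<alpha> where "\<alpha> k = a $ k" for k
    have innV: "a \<bullet> ind B = sum \<alpha> B" for B by (simp add: inner_ind \<alpha>_def)
    have innW: "a \<bullet> wq p q = sum \<alpha> UNIV / 2 - \<alpha> p - \<alpha> q" if "p \<noteq> q" for p q
      using that by (simp add: inner_wq \<alpha>_def)
    have hv: "sum \<alpha> B \<le> b0" if "card B = m+1" for B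
    proof -
      have "ind B \<in> GV m" unfolding GV_def using that by blast
      then have "ind B \<in> Pm m idx" using Gsub by (rule rev_subsetD[OF UnI1])
      then have "a \<bullet> ind B \<le> b0" using ab(1) by blast
      then show ?thesis using innV by simp
    qed
    have hw: "sum \<alpha> UNIV / 2 - \<alpha> p - \<alpha> q \<le> b0" if "p \<noteq> q" for p q
    proof -
      have "wq p q \<in> GW" unfolding GW_def using that by blast
      then have "wq p q \<in> Pm m idx" using Gsub by (rule rev_subsetD[OF UnI2])
      then have "a \<bullet> wq p q \<le> b0" using ab(1) by blast
      then show ?thesis using innW[OF that] by simp
    qed
    have proper: "(\<exists>B. card B = m+1 \<and> sum \<alpha> B < b0) \<or> (\<exists>p q. p \<noteq> q \<and> sum \<alpha> UNIV / 2 - \<alpha> p - \<alpha> q < b0)"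
    proof (rule ccontr)
      assume np: "\<not> ?thesis"
      have "?G \<subseteq> {x. a \<bullet> x = b0}"
      proof
        fix g assume "g \<in> ?G"
        then show "g \<in> {x. a \<bullet> x = b0}"
        proof
          assume "g \<in> GV m"
          then obtain B where B: "card B = m+1" "g = ind B" unfolding GV_def by blast
          then have "sum \<alpha> B \<le> b0" "\<not> sum \<alpha> B < b0" using hv np by auto
          then show ?thesis using B innV by simp
        next
          assume "g \<in> GW"
          then obtain p q where pq: "p \<noteq> q" "g = wq p q" unfolding GW_def by blast
          then have "sum \<alpha> UNIV / 2 - \<alpha> p - \<alpha> q \<le> b0" "\<not> sum \<alpha> UNIV / 2 - \<alpha> p - \<alpha> q < b0"
            using hw np by auto
          then show ?thesis using pq innW by simp
        qed
      qed
      then have "Pm m idx \<subseteq> {x. a \<bullet> x = b0}" unfolding PmG by (rule hull_minimal) (rule convex_hyperplane)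
      then have "F = Pm m idx" using ab by blast
      with ne show False ..
    qed
    show ?thesis
    proof (cases "\<exists>p q. p \<noteq> q \<and> sum \<alpha> UNIV / 2 - \<alpha> p - \<alpha> q = b0")
      case False
      have "S' \<subseteq> PI m idx"
      proof
        fix g assume g: "g \<in> S'"
        then have gG: "g \<in> ?G" "a \<bullet> g = b0" using onS by auto
        have "g \<notin> GW"
        proof
          assume "g \<in> GW"
          then obtain p q where "p \<noteq> q" "g = wq p q" unfolding GW_def by blast
          then show False using False gG innW by auto
        qed
        then have "g \<in> GV m" using gG by blast
        then show "g \<in> PI m idx" unfolding PI_eq[OF bij] by (rule hull_inc)
      qed
      moreover have "PI m idx \<subseteq> Pm m idx" unfolding PI_eq[OF bij] PmG by (rule hull_mono) blast
      moreover have "convex (PI m idx)" unfolding PI_eq[OF bij] by simp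
      ultimately have "F face_of PI m idx" using face_sub[OF face S'(2)] by blast
      then show ?thesis by blast
    next
      case True
      then obtain p0 q0 where wf: "p0 \<noteq> q0" "sum \<alpha> UNIV / 2 - \<alpha> p0 - \<alpha> q0 = b0" by blast
      have C: "(\<exists>R (t::real) \<mu>. card R = 4 \<and> (\<forall>k\<in>R. \<alpha> k = \<mu>) \<and> (\<forall>k. k \<notin> R \<longrightarrow> \<alpha> k = t) \<and> \<mu> < t \<and> b0 = (m+1)*t)
   \<or> (\<exists>Z. card Z = 3 \<and> (\<forall>B. card B = m+1 \<and> sum \<alpha> B = b0 \<longrightarrow> B \<inter> Z = {})
        \<and> (\<forall>p q. p \<noteq> q \<and> sum \<alpha> UNIV / 2 - \<alpha> p - \<alpha> q = b0 \<longrightarrow> p \<in> Z \<and> q \<in> Z))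
   \<or> (\<exists>z. (\<forall>B. card B = m+1 \<and> sum \<alpha> B = b0 \<longrightarrow> z \<notin> B)
        \<and> (\<forall>p q. p \<noteq> q \<and> sum \<alpha> UNIV / 2 - \<alpha> p - \<alpha> q = b0 \<longrightarrow> p = z \<or> q = z))"
        by (rule core[where \<alpha>=\<alpha> and b=b0 and m=m]) (fact cardn hv hw proper wf)+
      have pinj: "inj (inv \<sigma>)" if "\<sigma> permutes (UNIV::'n set)" for \<sigma>
        using permutes_inj[OF permutes_inv[OF that]] .
      show ?thesis
      proof (rule disjE[OF C])
        assume "\<exists>R (t::real) \<mu>. card R = 4 \<and> (\<forall>k\<in>R. \<alpha> k = \<mu>) \<and> (\<forall>k. k \<notin> R \<longrightarrow> \<alpha> k = t) \<and> \<mu> < t \<and> b0 = (m+1)*t"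
        then obtain R and t :: real and \<mu> where R0': "card R = 4 \<and> (\<forall>k\<in>R. \<alpha> k = \<mu>) \<and> (\<forall>k. k \<notin> R \<longrightarrow> \<alpha> k = t) \<and> \<mu> < t \<and> b0 = (m+1)*t"
          by (elim exE)
        have R: "card R = 4" "\<forall>k\<in>R. \<alpha> k = \<mu>" "\<forall>k. k \<notin> R \<longrightarrow> \<alpha> k = t" "\<mu> < t" "b0 = (m+1)*t"
          using R0' by auto
        have key: "a \<bullet> x = b0 \<longleftrightarrow> (\<Sum>k\<in>R. x $ k) = 0" if x: "x \<in> Pm m idx" for x
        proof -
          define X where "X = (\<Sum>k\<in>R. x $ k)"
          define Y where "Y = (\<Sum>k\<in>-R. x $ k)"
          have XY: "Y + X = real m + 1" using Pm_sum[OF bij cardn x] sum_split[of "\<lambda>k. x $ k" R]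
            unfolding X_def Y_def by simp
          have "a \<bullet> x = (\<Sum>k\<in>UNIV. \<alpha> k * x $ k)" by (simp add: inner_vec_def \<alpha>_def)
          also have "\<dots> = (\<Sum>k\<in>-R. \<alpha> k * x $ k) + (\<Sum>k\<in>R. \<alpha> k * x $ k)" by (rule sum_split)
          also have "(\<Sum>k\<in>-R. \<alpha> k * x $ k) = (\<Sum>k\<in>-R. t * x $ k)" using R(3) by (intro sum.cong) auto
          also have "(\<Sum>k\<in>R. \<alpha> k * x $ k) = (\<Sum>k\<in>R. \<mu> * x $ k)" using R(2) by (intro sum.cong) auto
          finally have ax: "a \<bullet> x = t * Y + \<mu> * X" unfolding X_def Y_def by (simp add: sum_distrib_left)
          have "a \<bullet> x = b0 \<longleftrightarrow> t * Y + \<mu> * X = t * (Y + X)" using ax R(5) XY by (simp add: algebra_simps)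
          also have "\<dots> \<longleftrightarrow> (\<mu> - t) * X = 0" by (simp add: algebra_simps)
          also have "\<dots> \<longleftrightarrow> X = 0" using R(4) by simp
          finally show ?thesis unfolding X_def .
        qed
        have FR: "F = {x \<in> Pm m idx. (\<Sum>k\<in>R. x $ k) = 0}"
        proof (intro set_eqI)
          fix x show "x \<in> F \<longleftrightarrow> x \<in> {x \<in> Pm m idx. (\<Sum>k\<in>R. x $ k) = 0}"
            using ab(2) key[of x] by auto
        qed
        define R0 where "R0 = idx ` {0,1,2,3}"
        have "inj_on idx {0..<2*m+6}" using bij by (simp add: bij_betw_def)
        then have "inj_on idx {0,1,2,3}" by (rule inj_on_subset) auto
        then have "card R0 = 4" unfolding R0_def by (simp add: card_image)
        then obtain \<sigma> where \<sigma>: "\<sigma> permutes UNIV" "\<sigma> ` R0 = R" using perm_exists[of R0 R] R(1) by auto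
        have "F = coordperm \<sigma> ` Facet0 m idx"
        proof (intro set_eqI iffI)
          fix y assume "y \<in> F"
          then have y: "y \<in> Pm m idx" "(\<Sum>k\<in>R. y $ k) = 0" using FR by auto
          define x where "x = coordperm (inv \<sigma>) y"
          have xP: "x \<in> Pm m idx" using Pm_perm[OF bij permutes_inv[OF \<sigma>(1)]] y(1) unfolding x_def by blast
          have yx: "y = coordperm \<sigma> x" unfolding x_def using coordperm_inv[OF \<sigma>(1)] by simp
          have "(\<Sum>j\<in>R0. x $ j) = 0" using perm_sum[OF \<sigma>(1), where A=R0 and x=x] y(2) \<sigma>(2) yx by simp
          then have "x \<in> Facet0 m idx" using xP facet_sum[OF bij, of x] unfolding Facet0_def R0_def by simp
          then show "y \<in> coordperm \<sigma> ` Facet0 m idx" using yx by blast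
        next
          fix y assume "y \<in> coordperm \<sigma> ` Facet0 m idx"
          then obtain x where x: "x \<in> Facet0 m idx" "y = coordperm \<sigma> x" by blast
          have xP: "x \<in> Pm m idx" and "x $ idx 0 + x $ idx 1 + x $ idx 2 + x $ idx 3 = 0"
            using x(1) unfolding Facet0_def by auto
          then have "(\<Sum>j\<in>R0. x $ j) = 0" using facet_sum[OF bij, of x] unfolding R0_def by simp
          then have "(\<Sum>k\<in>R. y $ k) = 0" using perm_sum[OF \<sigma>(1), where A=R0 and x=x] \<sigma>(2) x(2) by simp
          moreover have "y \<in> Pm m idx" using Pm_perm[OF bij \<sigma>(1)] xP x(2) by blast
          ultimately show "y \<in> F" using FR by blast
        qed
        then show ?thesis using nf \<sigma>(1) by blast
      next
        assume "(\<exists>Z. card Z = 3 \<and> (\<forall>B. card B = m+1 \<and> sum \<alpha> B = b0 \<longrightarrow> B \<inter> Z = {})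
        \<and> (\<forall>p q. p \<noteq> q \<and> sum \<alpha> UNIV / 2 - \<alpha> p - \<alpha> q = b0 \<longrightarrow> p \<in> Z \<and> q \<in> Z))
   \<or> (\<exists>z. (\<forall>B. card B = m+1 \<and> sum \<alpha> B = b0 \<longrightarrow> z \<notin> B)
        \<and> (\<forall>p q. p \<noteq> q \<and> sum \<alpha> UNIV / 2 - \<alpha> p - \<alpha> q = b0 \<longrightarrow> p = z \<or> q = z))"
        then show ?thesis
        proof
        assume "\<exists>Z. card Z = 3 \<and> (\<forall>B. card B = m+1 \<and> sum \<alpha> B = b0 \<longrightarrow> B \<inter> Z = {})
        \<and> (\<forall>p q. p \<noteq> q \<and> sum \<alpha> UNIV / 2 - \<alpha> p - \<alpha> q = b0 \<longrightarrow> p \<in> Z \<and> q \<in> Z)"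
        then obtain Z where Z0: "card Z = 3 \<and> (\<forall>B. card B = m+1 \<and> sum \<alpha> B = b0 \<longrightarrow> B \<inter> Z = {})
        \<and> (\<forall>p q. p \<noteq> q \<and> sum \<alpha> UNIV / 2 - \<alpha> p - \<alpha> q = b0 \<longrightarrow> p \<in> Z \<and> q \<in> Z)" by (elim exE)
        have Z: "card Z = 3" "\<forall>B. card B = m+1 \<and> sum \<alpha> B = b0 \<longrightarrow> B \<inter> Z = {}"
          "\<forall>p q. p \<noteq> q \<and> sum \<alpha> UNIV / 2 - \<alpha> p - \<alpha> q = b0 \<longrightarrow> p \<in> Z \<and> q \<in> Z"
          using Z0 by auto
        define C0 where "C0 = idx ` {0,1,2}"
        have "inj_on idx {0..<2*m+6}" using bij by (simp add: bij_betw_def)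
        then have "inj_on idx {0,1,2}" by (rule inj_on_subset) auto
        then have "card C0 = 3" unfolding C0_def by (simp add: card_image)
        then obtain \<sigma> where \<sigma>: "\<sigma> permutes UNIV" "\<sigma> ` C0 = Z" using perm_exists[of C0 Z] Z(1) by auto
        have invZ: "inv \<sigma> x \<in> C0 \<longleftrightarrow> x \<in> Z" for x
        proof
          assume "inv \<sigma> x \<in> C0" then have "\<sigma> (inv \<sigma> x) \<in> Z" using \<sigma>(2) by blast
          then show "x \<in> Z" using permutes_inverses(1)[OF \<sigma>(1)] by simp
        next
          assume "x \<in> Z" then obtain c where "c \<in> C0" "x = \<sigma> c" using \<sigma>(2) by blast
          then show "inv \<sigma> x \<in> C0" using permutes_inverses(2)[OF \<sigma>(1)] by simp
        qed
        have "S' \<subseteq> coordperm \<sigma> ` PIII m idx"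
        proof
          fix g assume g: "g \<in> S'"
          then have gG: "g \<in> ?G" "a \<bullet> g = b0" using onS by auto
          show "g \<in> coordperm \<sigma> ` PIII m idx"
          proof (cases "g \<in> GV m")
            case True
            then obtain B where B: "card B = m+1" "g = ind B" unfolding GV_def by blast
            then have "B \<inter> Z = {}" using Z(2) gG innV by auto
            then have "inv \<sigma> ` B \<inter> C0 = {}" using invZ by auto
            moreover have "card (inv \<sigma> ` B) = m+1" using B pinj[OF \<sigma>(1)] by (simp add: card_image inj_on_subset)
            ultimately have "ind (inv \<sigma> ` B) \<in> PIII m idx" using PIII_gen[OF bij] unfolding C0_def by blast
            then show ?thesis using img_ind[OF \<sigma>(1)] B by simp
          next
            case False
            then obtain p q where pq: "p \<noteq> q" "g = wq p q" using gG unfolding GW_def by blast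
            then have "p \<in> Z \<and> q \<in> Z" using Z(3) gG innW by auto
            then have "inv \<sigma> p \<in> C0" "inv \<sigma> q \<in> C0" using invZ by auto
            moreover have "inv \<sigma> p \<noteq> inv \<sigma> q" using pq pinj[OF \<sigma>(1)] by (meson injD)
            ultimately have "wq (inv \<sigma> p) (inv \<sigma> q) \<in> PIII m idx" using PIII_genw unfolding C0_def by blast
            then show ?thesis using img_wq[OF \<sigma>(1)] pq by simp
          qed
        qed
        moreover have "convex (coordperm \<sigma> ` PIII m idx)"
          unfolding PIII_def by (rule convex_linear_image[OF coordperm_linear]) simp
        moreover have "coordperm \<sigma> ` PIII m idx \<subseteq> Pm m idx"
          using Pm_perm[OF bij \<sigma>(1)] PIII_sub by blast
        ultimately have "F face_of coordperm \<sigma> ` PIII m idx" using face_sub[OF face S'(2)] by blast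
        then show ?thesis using \<sigma>(1) by blast
      next
        assume "\<exists>z. (\<forall>B. card B = m+1 \<and> sum \<alpha> B = b0 \<longrightarrow> z \<notin> B)
        \<and> (\<forall>p q. p \<noteq> q \<and> sum \<alpha> UNIV / 2 - \<alpha> p - \<alpha> q = b0 \<longrightarrow> p = z \<or> q = z)"
        then obtain z where z0: "(\<forall>B. card B = m+1 \<and> sum \<alpha> B = b0 \<longrightarrow> z \<notin> B)
        \<and> (\<forall>p q. p \<noteq> q \<and> sum \<alpha> UNIV / 2 - \<alpha> p - \<alpha> q = b0 \<longrightarrow> p = z \<or> q = z)" by (elim exE)
        have z: "\<forall>B. card B = m+1 \<and> sum \<alpha> B = b0 \<longrightarrow> z \<notin> B"
          "\<forall>p q. p \<noteq> q \<and> sum \<alpha> UNIV / 2 - \<alpha> p - \<alpha> q = b0 \<longrightarrow> p = z \<or> q = z"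
          using z0 by auto
        obtain \<sigma> where \<sigma>: "\<sigma> permutes UNIV" "\<sigma> ` {idx 0} = {z}" using perm_exists[of "{idx 0}" "{z}"] by auto
        have s0: "\<sigma> (idx 0) = z" using \<sigma>(2) by simp
        have iz: "inv \<sigma> z = idx 0" using s0 permutes_inverses(2)[OF \<sigma>(1)] by metis
        have invz: "inv \<sigma> x = idx 0 \<longleftrightarrow> x = z" for x
          using iz permutes_inverses(1)[OF \<sigma>(1)] by metis
        have "S' \<subseteq> coordperm \<sigma> ` PII m idx"
        proof
          fix g assume g: "g \<in> S'"
          then have gG: "g \<in> ?G" "a \<bullet> g = b0" using onS by auto
          show "g \<in> coordperm \<sigma> ` PII m idx"
          proof (cases "g \<in> GV m")
            case True
            then obtain B where B: "card B = m+1" "g = ind B" unfolding GV_def by blast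
            then have "z \<notin> B" using z(1) gG innV by auto
            have "idx 0 \<notin> inv \<sigma> ` B"
            proof
              assume "idx 0 \<in> inv \<sigma> ` B"
              then obtain x where "x \<in> B" "inv \<sigma> x = idx 0" by auto
              then have "x = z" using invz by blast
              then show False using \<open>z \<notin> B\<close> \<open>x \<in> B\<close> by simp
            qed
            moreover have "card (inv \<sigma> ` B) = m+1" using B pinj[OF \<sigma>(1)] by (simp add: card_image inj_on_subset)
            ultimately have "ind (inv \<sigma> ` B) \<in> PII m idx" using PII_gen[OF bij] by blast
            then show ?thesis using img_ind[OF \<sigma>(1)] B by simp
          next
            case False
            then obtain p q where pq: "p \<noteq> q" "g = wq p q" using gG unfolding GW_def by blast
            then have "p = z \<or> q = z" using z(2) gG innW by auto
            then obtain q' where q': "g = wq z q'" "q' \<noteq> z" using pq wq_sym by metis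
            have "inv \<sigma> q' \<noteq> idx 0" using invz q'(2) by simp
            then have "wq (idx 0) (inv \<sigma> q') \<in> PII m idx" using PII_genw[OF bij] by blast
            then have "wq (inv \<sigma> z) (inv \<sigma> q') \<in> PII m idx" using iz by simp
            then show ?thesis using img_wq[OF \<sigma>(1)] q' by simp
          qed
        qed
        moreover have "convex (coordperm \<sigma> ` PII m idx)"
          unfolding PII_def by (rule convex_linear_image[OF coordperm_linear]) simp
        moreover have "coordperm \<sigma> ` PII m idx \<subseteq> Pm m idx"
          using Pm_perm[OF bij \<sigma>(1)] PII_sub by blast
        ultimately have "F face_of coordperm \<sigma> ` PII m idx" using face_sub[OF face S'(2)] by blast
        then show ?thesis using \<sigma>(1) by blast
      qed
      qed
    qed
  qed
qed

end
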